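(* There exists an absolute constant $c>0$ such that the following holds. Let $r$ be a positive integer and let $M\in\{0,1\}^{n\times n}$ with $\operatorname{rank}(M)\leq r$ and $d=|M|/n\leq n/2$. Then $$\operatorname{pdisc}(M)\geq c\cdot\min\left\{dn,\frac{d^{1/2}n^{3/2}}{\sqrt r}\right\}.$$
   Context: $|M|$ is the number of $1$ entries of $M$; let $N=2n$ and $p=|M|/n^2$. The symmetrization of $M$ is the symmetric matrix $A\in\mathbb{R}^{N\times N}$ with $A_{i,j+n}=A_{j+n,i}=M_{i,j}$ and all other entries $0$. $L\in\mathbb{R}^{N\times N}$ is the adjacency matrix of the complete bipartite graph with parts $[n]$ and $[n+1,N]$. For $X\in\mathbb{R}^{N\times N}$, $\operatorname{disc}(X)=\langle X,A\rangle-p\langle X,L\rangle$ (entrywise inner product), and $\operatorname{pdisc}(M)=\max\{\operatorname{disc}(X): X\text{ symmetric positive semidefinite},\ X_{i,i}\leq1\ \forall i\}$. *)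

theory Defs
  imports Complex_Main "Jordan_Normal_Form.DL_Rank"
begin

definition ones :: "real mat \<Rightarrow> nat" where
  "ones M = card {(i,j). i < dim_row M \<and> j < dim_col M \<and> M $$ (i,j) = 1}"

definition symmetrization :: "real mat \<Rightarrow> real mat" where
  "symmetrization M = (let n = dim_row M in
     mat (2*n) (2*n) (\<lambda>(i,j). if i < n \<and> n \<le> j then M $$ (i, j - n)
                          else if n \<le> i \<and> j < n then M $$ (j, i - n) else 0))"

definition bip_mat :: "nat \<Rightarrow> real mat" where
  "bip_mat n = mat (2*n) (2*n) (\<lambda>(i,j). if (i < n) \<noteq> (j < n) then 1 else 0)"

definition entry_inner :: "real mat \<Rightarrow> real mat \<Rightarrow> real" where
  "entry_inner X Y = (\<Sum>i<dim_row X. \<Sum>j<dim_col X. X $$ (i,j) * Y $$ (i,j))"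

definition psd :: "nat \<Rightarrow> real mat \<Rightarrow> bool" where
  "psd N X \<longleftrightarrow> X \<in> carrier_mat N N \<and> transpose_mat X = X \<and>
     (\<forall>v \<in> carrier_vec N. v \<bullet> (X *\<^sub>v v) \<ge> 0)"

definition disc :: "real mat \<Rightarrow> real mat \<Rightarrow> real" where
  "disc M X = (let n = dim_row M; p = real (ones M) / (real n)^2 in
     entry_inner X (symmetrization M) - p * entry_inner X (bip_mat n))"

text \<open>pdisc(M) = max of disc(X) over symmetric PSD X with diagonal entries at most 1
  (the maximum is attained, so it equals the supremum).\<close>
definition pdisc :: "real mat \<Rightarrow> real" where
  "pdisc M = Sup (disc M ` {X. psd (2 * dim_row M) X \<and>
                              (\<forall>i < 2 * dim_row M. X $$ (i,i) \<le> 1)})"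

end

theory Submission imports Defs "Jordan_Normal_Form.Gram_Schmidt" begin

lemma sum_split_add: "(\<Sum>s<n+m. f s) = (\<Sum>s<n. f s) + (\<Sum>j<m. f (n+j))" for n m :: nat
  by (induction m) (simp_all add: add_ac)

lemma sum_split_2n: "(\<Sum>s<2*n. f s) = (\<Sum>s<n. f s) + (\<Sum>j<n. f (n+j))" for n :: nat
  using sum_split_add[where f=f and n=n and m=n] by (simp add: mult_2)

lemma psd_entry_bound:
  assumes X: "psd N X" and d: "\<forall>i<N. X $$ (i,i) \<le> 1" and s: "s < N" and t: "t < N"
  shows "\<bar>X $$ (s,t)\<bar> \<le> 1"
proof -
  have XC: "X \<in> carrier_mat N N" and sym: "transpose_mat X = X"
    and pos: "\<And>v. v \<in> carrier_vec N \<Longrightarrow> v \<bullet> (X *\<^sub>v v) \<ge> 0" using X unfolding psd_def by auto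
  have symE: "X $$ (t,s) = X $$ (s,t)" using sym s t XC
    by (metis carrier_matD index_transpose_mat(1))
  have key: "X $$ (s,s) + \<sigma> * X $$ (s,t) + \<sigma> * X $$ (t,s) + \<sigma>*\<sigma> * X $$ (t,t) \<ge> 0" for \<sigma> :: real
  proof -
    define v where "v = vec N (\<lambda>l. (if l = s then 1 else 0) + \<sigma> * (if l = t then 1 else 0))"
    have vC: "v \<in> carrier_vec N" unfolding v_def by simp
    have Xv: "(X *\<^sub>v v) $ l = X $$ (l,s) + \<sigma> * X $$ (l,t)" if "l < N" for l
    proof -
      have "(X *\<^sub>v v) $ l = (\<Sum>k<N. X $$ (l,k) * v $ k)"
        using that XC vC unfolding mult_mat_vec_def scalar_prod_def
        by (simp add: lessThan_atLeast0 row_def)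
      also have "\<dots> = (\<Sum>k<N. (if k = s then X $$ (l,k) else 0) + \<sigma> * (if k = t then X $$ (l,k) else 0))"
        by (intro sum.cong) (auto simp: v_def algebra_simps)
      also have "\<dots> = X $$ (l,s) + \<sigma> * X $$ (l,t)"
        using s t by (simp add: sum.distrib sum_distrib_left[symmetric])
      finally show ?thesis .
    qed
    have "v \<bullet> (X *\<^sub>v v) = (\<Sum>l<N. v $ l * (X *\<^sub>v v) $ l)"
      using XC vC unfolding scalar_prod_def by (simp add: lessThan_atLeast0)
    also have "\<dots> = (\<Sum>l<N. (if l = s then (X *\<^sub>v v) $ l else 0) + \<sigma> * (if l = t then (X *\<^sub>v v) $ l else 0))"
      by (intro sum.cong) (auto simp: v_def algebra_simps)
    also have "\<dots> = (X *\<^sub>v v) $ s + \<sigma> * (X *\<^sub>v v) $ t"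
      using s t by (simp add: sum.distrib sum_distrib_left[symmetric])
    also have "\<dots> = X $$ (s,s) + \<sigma> * X $$ (s,t) + \<sigma> * X $$ (t,s) + \<sigma>*\<sigma> * X $$ (t,t)"
      using Xv s t by (simp add: algebra_simps)
    finally show ?thesis using pos[OF vC] by simp
  qed
  have d1: "X $$ (s,s) \<le> 1" "X $$ (t,t) \<le> 1" using d s t by auto
  have a: "X $$ (s,s) + 2 * X $$ (s,t) + X $$ (t,t) \<ge> 0" using key[of 1] symE by simp
  have b: "X $$ (s,s) - 2 * X $$ (s,t) + X $$ (t,t) \<ge> 0" using key[of "-1"] symE by simp
  show ?thesis using a b d1 by linarith
qed

lemma entry_inner_bound:
  assumes "X \<in> carrier_mat N N" and "\<forall>s<N. \<forall>t<N. \<bar>X $$ (s,t)\<bar> \<le> 1"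
  shows "\<bar>entry_inner X Y\<bar> \<le> (\<Sum>s<N. \<Sum>t<N. \<bar>Y $$ (s,t)\<bar>)"
proof -
  have "\<bar>entry_inner X Y\<bar> \<le> (\<Sum>s<N. \<bar>\<Sum>t<N. X $$ (s,t) * Y $$ (s,t)\<bar>)"
    using assms(1) unfolding entry_inner_def by (simp add: sum_abs)
  also have "\<dots> \<le> (\<Sum>s<N. \<Sum>t<N. \<bar>X $$ (s,t) * Y $$ (s,t)\<bar>)"
    by (intro sum_mono sum_abs)
  also have "\<dots> \<le> (\<Sum>s<N. \<Sum>t<N. \<bar>Y $$ (s,t)\<bar>)"
  proof (intro sum_mono)
    fix s t assume "s \<in> {..<N}" "t \<in> {..<N}"
    hence "\<bar>X $$ (s,t)\<bar> \<le> 1" using assms(2) by auto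
    thus "\<bar>X $$ (s,t) * Y $$ (s,t)\<bar> \<le> \<bar>Y $$ (s,t)\<bar>"
      by (simp add: abs_mult mult_left_le_one_le)
  qed
  finally show ?thesis .
qed

lemma pdisc_ge:
  assumes X: "psd (2 * dim_row M) X" and d: "\<forall>i < 2 * dim_row M. X $$ (i,i) \<le> 1"
  shows "disc M X \<le> pdisc M"
proof -
  let ?N = "2 * dim_row M"
  let ?S = "{X. psd ?N X \<and> (\<forall>i < ?N. X $$ (i,i) \<le> 1)}"
  let ?B = "(\<Sum>s<?N. \<Sum>t<?N. \<bar>symmetrization M $$ (s,t)\<bar>) +
     \<bar>real (ones M) / (real (dim_row M))^2\<bar> * (\<Sum>s<?N. \<Sum>t<?N. \<bar>bip_mat (dim_row M) $$ (s,t)\<bar>)"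
  have bd: "disc M Y \<le> ?B" if "Y \<in> ?S" for Y
  proof -
    have YC: "Y \<in> carrier_mat ?N ?N" using that unfolding psd_def by auto
    have e: "\<forall>s<?N. \<forall>t<?N. \<bar>Y $$ (s,t)\<bar> \<le> 1" using that psd_entry_bound by blast
    have 1: "\<bar>entry_inner Y (symmetrization M)\<bar> \<le> (\<Sum>s<?N. \<Sum>t<?N. \<bar>symmetrization M $$ (s,t)\<bar>)"
      by (rule entry_inner_bound[OF YC e])
    have 2: "\<bar>entry_inner Y (bip_mat (dim_row M))\<bar> \<le> (\<Sum>s<?N. \<Sum>t<?N. \<bar>bip_mat (dim_row M) $$ (s,t)\<bar>)"
      by (rule entry_inner_bound[OF YC e])
    define a where "a = entry_inner Y (symmetrization M)"
    define b where "b = entry_inner Y (bip_mat (dim_row M))"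
    define p where "p = real (ones M) / (real (dim_row M))^2"
    have "disc M Y = a - p * b" unfolding disc_def Let_def a_def b_def p_def by simp
    also have "\<dots> \<le> \<bar>a\<bar> + \<bar>p\<bar> * \<bar>b\<bar>"
    proof -
      have "a \<le> \<bar>a\<bar>" by simp
      moreover have "- (p * b) \<le> \<bar>p\<bar> * \<bar>b\<bar>" by (metis abs_ge_minus_self abs_mult)
      ultimately show ?thesis by linarith
    qed
    also have "\<dots> \<le> ?B" using 1 2 unfolding a_def b_def p_def by (intro add_mono mult_left_mono) auto
    finally show ?thesis .
  qed
  have "bdd_above (disc M ` ?S)" using bd by (intro bdd_aboveI2) 
  moreover have "X \<in> ?S" using X d by auto
  ultimately show ?thesis unfolding pdisc_def by (intro cSup_upper) auto
qed

lemma gram_lb: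
  fixes M :: "real mat" and K :: "'k set" and a b :: "nat \<Rightarrow> 'k \<Rightarrow> real"
  assumes M: "M \<in> carrier_mat n n" and K: "finite K"
    and ha: "\<And>i. i < n \<Longrightarrow> (\<Sum>k\<in>K. (a i k)^2) \<le> 1"
    and hb: "\<And>j. j < n \<Longrightarrow> (\<Sum>k\<in>K. (b j k)^2) \<le> 1"
  shows "2 * (\<Sum>i<n. \<Sum>j<n. (M $$ (i,j) - real (ones M) / (real n)^2) * (\<Sum>k\<in>K. a i k * b j k)) \<le> pdisc M"
proof -
  define w where "w s k = (if s < n then a s k else b (s - n) k)" for s k
  define N where "N = 2 * n"
  define X where "X = mat N N (\<lambda>(s,t). \<Sum>k\<in>K. w s k * w t k)"
  define G where "G i j = (\<Sum>k\<in>K. a i k * b j k)" for i j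
  have dimM: "dim_row M = n" using M by auto
  have XC: "X \<in> carrier_mat N N" unfolding X_def by simp
  have Xst: "X $$ (s,t) = (\<Sum>k\<in>K. w s k * w t k)" if "s < N" "t < N" for s t
    using that unfolding X_def by simp
  have sym: "transpose_mat X = X"
    by (rule eq_matI) (auto simp: X_def mult.commute)
  have pos: "v \<bullet> (X *\<^sub>v v) \<ge> 0" if vC: "v \<in> carrier_vec N" for v
  proof -
    have Xv: "(X *\<^sub>v v) $ s = (\<Sum>t<N. X $$ (s,t) * v $ t)" if "s < N" for s
      using that XC vC unfolding mult_mat_vec_def scalar_prod_def
      by (simp add: lessThan_atLeast0 row_def)
    have "v \<bullet> (X *\<^sub>v v) = (\<Sum>s<N. v $ s * (X *\<^sub>v v) $ s)"
      using XC vC unfolding scalar_prod_def by (simp add: lessThan_atLeast0)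
    also have "\<dots> = (\<Sum>s<N. \<Sum>t<N. \<Sum>k\<in>K. v $ s * w s k * (v $ t * w t k))"
      by (intro sum.cong refl) (simp add: Xv Xst sum_distrib_left sum_distrib_right mult_ac)
    also have "\<dots> = (\<Sum>k\<in>K. \<Sum>s<N. \<Sum>t<N. v $ s * w s k * (v $ t * w t k))"
    proof -
      have "(\<Sum>s<N. \<Sum>t<N. \<Sum>k\<in>K. v $ s * w s k * (v $ t * w t k))
          = (\<Sum>s<N. \<Sum>k\<in>K. \<Sum>t<N. v $ s * w s k * (v $ t * w t k))"
        by (intro sum.cong refl) (rule sum.swap)
      also have "\<dots> = (\<Sum>k\<in>K. \<Sum>s<N. \<Sum>t<N. v $ s * w s k * (v $ t * w t k))"
        by (rule sum.swap)
      finally show ?thesis .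
    qed
    also have "\<dots> = (\<Sum>k\<in>K. (\<Sum>s<N. v $ s * w s k)^2)"
      by (simp add: power2_eq_square sum_product)
    also have "\<dots> \<ge> 0" by (intro sum_nonneg) simp
    finally show ?thesis .
  qed
  have psdX: "psd (2 * dim_row M) X" using XC sym pos unfolding psd_def dimM N_def by auto
  have diag: "\<forall>i < 2 * dim_row M. X $$ (i,i) \<le> 1"
  proof (intro allI impI)
    fix s assume "s < 2 * dim_row M"
    hence s: "s < N" using dimM N_def by simp
    show "X $$ (s,s) \<le> 1"
    proof (cases "s < n")
      case True thus ?thesis using Xst[OF s s] ha[of s] by (simp add: w_def power2_eq_square)
    next
      case False thus ?thesis using Xst[OF s s] hb[of "s - n"] s N_def by (simp add: w_def power2_eq_square)
    qed
  qed
  have X1: "X $$ (i, n+j) = G i j" if "i < n" "j < n" for i j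
    using that Xst[of i "n+j"] unfolding G_def w_def N_def by simp
  have X2: "X $$ (n+i, j) = G j i" if "i < n" "j < n" for i j
    using that Xst[of "n+i" j] unfolding G_def w_def N_def by (simp add: mult.commute)
  have X3: "X $$ (i, j) = X $$ (i,j)" ..
  have S: "entry_inner X (symmetrization M) = 2 * (\<Sum>i<n. \<Sum>j<n. M $$ (i,j) * G i j)"
  proof -
    define Sm where "Sm = symmetrization M"
    have Sm: "Sm $$ (s,t) = (if s < n \<and> n \<le> t then M $$ (s, t - n)
                          else if n \<le> s \<and> t < n then M $$ (t, s - n) else 0)" if "s < N" "t < N" for s t
      using that unfolding Sm_def symmetrization_def Let_def dimM N_def by simp
    have "entry_inner X Sm = (\<Sum>s<N. \<Sum>t<N. X $$ (s,t) * Sm $$ (s,t))"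
      using XC unfolding entry_inner_def by simp
    also have "\<dots> = (\<Sum>i<n. \<Sum>j<n. X $$ (i, n+j) * M $$ (i,j)) + (\<Sum>i<n. \<Sum>j<n. X $$ (n+i, j) * M $$ (j,i))"
      unfolding N_def sum_split_2n using Sm unfolding N_def by (simp add: sum.distrib)
    also have "\<dots> = (\<Sum>i<n. \<Sum>j<n. M $$ (i,j) * G i j) + (\<Sum>i<n. \<Sum>j<n. M $$ (j,i) * G j i)"
      using X1 X2 by (simp add: mult.commute)
    also have "(\<Sum>i<n. \<Sum>j<n. M $$ (j,i) * G j i) = (\<Sum>i<n. \<Sum>j<n. M $$ (i,j) * G i j)"
      by (rule sum.swap)
    finally show ?thesis unfolding Sm_def by simp
  qed
  have L: "entry_inner X (bip_mat n) = 2 * (\<Sum>i<n. \<Sum>j<n. G i j)"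
  proof -
    define Lm where "Lm = bip_mat n"
    have Lm: "Lm $$ (s,t) = (if (s < n) \<noteq> (t < n) then 1 else 0)" if "s < N" "t < N" for s t
      using that unfolding Lm_def bip_mat_def N_def by simp
    have "entry_inner X Lm = (\<Sum>s<N. \<Sum>t<N. X $$ (s,t) * Lm $$ (s,t))"
      using XC unfolding entry_inner_def by simp
    also have "\<dots> = (\<Sum>i<n. \<Sum>j<n. X $$ (i, n+j)) + (\<Sum>i<n. \<Sum>j<n. X $$ (n+i, j))"
      unfolding N_def sum_split_2n using Lm unfolding N_def by (simp add: sum.distrib)
    also have "\<dots> = (\<Sum>i<n. \<Sum>j<n. G i j) + (\<Sum>i<n. \<Sum>j<n. G j i)"
      using X1 X2 by simp
    also have "(\<Sum>i<n. \<Sum>j<n. G j i) = (\<Sum>i<n. \<Sum>j<n. G i j)"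
      by (rule sum.swap)
    finally show ?thesis unfolding Lm_def by simp
  qed
  have "disc M X = 2 * (\<Sum>i<n. \<Sum>j<n. (M $$ (i,j) - real (ones M) / (real n)^2) * G i j)"
    unfolding disc_def Let_def dimM S L
    by (simp add: algebra_simps sum_subtractf sum_distrib_left)
  moreover have "disc M X \<le> pdisc M" by (rule pdisc_ge[OF psdX diag])
  ultimately show ?thesis unfolding G_def by simp
qed

lemma (in vec_space) span_orth_expand:
  assumes U: "finite U" "U \<subseteq> carrier_vec n"
    and orth: "\<forall>u\<in>U. \<forall>w\<in>U. u \<noteq> w \<longrightarrow> u \<bullet> w = 0"
    and pos: "\<forall>u\<in>U. u \<bullet> u \<noteq> 0"
    and v: "v \<in> span U" and i: "i < n"
  shows "v $ i = (\<Sum>u\<in>U. u $ i * (u \<bullet> v) / (u \<bullet> u))"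
proof -
  obtain c A where vA: "v = lincomb c A" and A: "finite A" "A \<subseteq> U"
    using in_spanE[OF v] by blast
  have AC: "A \<subseteq> carrier_vec n" using A U by auto
  have vi: "v $ l = (\<Sum>x\<in>A. c x * x $ l)" if "l < n" for l
    unfolding vA using lincomb_index[OF that AC] .
  have vC: "v \<in> carrier_vec n" unfolding vA using AC by (intro lincomb_closed) auto
  have uv: "u \<bullet> v = (if u \<in> A then c u * (u \<bullet> u) else 0)" if uU: "u \<in> U" for u
  proof -
    have uC: "u \<in> carrier_vec n" using uU U by auto
    have "u \<bullet> v = (\<Sum>l<n. u $ l * v $ l)"
      using uC vC unfolding scalar_prod_def by (simp add: lessThan_atLeast0)
    also have "\<dots> = (\<Sum>l<n. \<Sum>x\<in>A. c x * (u $ l * x $ l))"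
      by (intro sum.cong refl) (simp add: vi sum_distrib_left mult_ac)
    also have "\<dots> = (\<Sum>x\<in>A. c x * (\<Sum>l<n. u $ l * x $ l))"
      by (subst sum.swap) (simp add: sum_distrib_left)
    also have "\<dots> = (\<Sum>x\<in>A. c x * (u \<bullet> x))"
    proof (intro sum.cong refl)
      fix x assume "x \<in> A"
      hence "x \<in> carrier_vec n" using AC by auto
      thus "c x * (\<Sum>l<n. u $ l * x $ l) = c x * (u \<bullet> x)"
        unfolding scalar_prod_def by (simp add: lessThan_atLeast0)
    qed
    also have "\<dots> = (\<Sum>x\<in>A. if x = u then c u * (u \<bullet> u) else 0)"
      using orth uU A by (intro sum.cong refl) auto
    also have "\<dots> = (if u \<in> A then c u * (u \<bullet> u) else 0)"
      using A by (simp add: sum.delta')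
    finally show ?thesis .
  qed
  have "(\<Sum>u\<in>U. u $ i * (u \<bullet> v) / (u \<bullet> u)) = (\<Sum>u\<in>U. if u \<in> A then c u * u $ i else 0)"
    using pos by (intro sum.cong refl) (auto simp: uv)
  also have "\<dots> = (\<Sum>u\<in>A. c u * u $ i)"
    using A U by (simp add: sum.If_cases Int_absorb1)
  also have "\<dots> = v $ i" using vi[OF i] by simp
  finally show ?thesis by simp
qed

lemma (in vec_space) cols_in_span_maximal:
  assumes M: "M \<in> carrier_mat n nc"
    and max: "maximal S (\<lambda>T. T \<subseteq> set (cols M) \<and> lin_indpt T)"
  shows "set (cols M) \<subseteq> span S"
proof
  fix c assume c: "c \<in> set (cols M)"
  have SC: "S \<subseteq> set (cols M)" and li: "lin_indpt S" using max unfolding maximal_def by auto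
  have colsC: "set (cols M) \<subseteq> carrier_vec n" using M cols_dim by blast
  hence S_C: "S \<subseteq> carrier_vec n" using SC by auto
  have cC: "c \<in> carrier_vec n" using c colsC by auto
  show "c \<in> span S"
  proof (cases "c \<in> S")
    case True thus ?thesis using span_mem[OF S_C] by auto
  next
    case False
    have "lin_dep (S \<union> {c})"
    proof (rule ccontr)
      assume "\<not> lin_dep (S \<union> {c})"
      hence "S \<union> {c} \<subseteq> set (cols M) \<and> lin_indpt (S \<union> {c})" using SC c by auto
      hence "S \<union> {c} = S" using max unfolding maximal_def by blast
      thus False using False by auto
    qed
    thus ?thesis using lin_dep_iff_in_span[OF S_C li _ False] cC by auto
  qed
qed

lemma orth_decomp:
  fixes M :: "real mat"
  assumes M: "M \<in> carrier_mat n n"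
  shows "\<exists>U. finite U \<and> U \<subseteq> carrier_vec n \<and> card U = vec_space.rank n M \<and>
    (\<forall>u\<in>U. u \<bullet> u > 0) \<and> (\<forall>u\<in>U. \<forall>w\<in>U. u \<noteq> w \<longrightarrow> u \<bullet> w = 0) \<and>
    (\<forall>j<n. \<forall>i<n. M $$ (i,j) = (\<Sum>u\<in>U. u $ i * (u \<bullet> col M j) / (u \<bullet> u)))"
proof -
  interpret vec_space "TYPE(real)" n .
  have colsC: "set (cols M) \<subseteq> carrier_vec n" using M cols_dim by blast
  obtain S where finS: "finite S" and max: "maximal S (\<lambda>T. T \<subseteq> set (cols M) \<and> lin_indpt T)"
    using maximal_exists_superset[of "set (cols M)" "(\<lambda>T. T \<subseteq> set (cols M) \<and> lin_indpt T)" "{}"]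
    by (metis (no_types, lifting) List.finite_set colsC empty_subsetI subset_li_is_li fin_dim finite_basis_exists vec_vs vectorspace.basis_def)
  have rk: "rank M = card S" using rank_card_indpt[OF M max] .
  have SC: "S \<subseteq> set (cols M)" and li: "lin_indpt S" using max unfolding maximal_def by auto
  have S_C: "S \<subseteq> carrier_vec n" using SC colsC by auto
  obtain ws where ws: "set ws = S" "distinct ws" using finite_distinct_list[OF finS] by blast
  define us where "us = gram_schmidt n ws"
  have gs: "span (set ws) = span (set us)" "corthogonal us" "set us \<subseteq> carrier_vec n"
     "length us = length ws" "distinct us"
    using cof_vec_space.gram_schmidt_result[of ws n us] ws S_C li us_def by auto
  define U where "U = set us"
  have cardU: "card U = card S" unfolding U_def using gs ws distinct_card by metis
  have UC: "U \<subseteq> carrier_vec n" using gs U_def by auto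
  have cs: "\<And>x y :: real vec. x \<bullet>c y = x \<bullet> y"
    unfolding scalar_prod_def conjugate_vec_def by simp
  have orth: "\<forall>u\<in>U. \<forall>w\<in>U. u \<noteq> w \<longrightarrow> u \<bullet> w = 0"
  proof (intro ballI impI)
    fix u w assume "u \<in> U" "w \<in> U" "u \<noteq> w"
    then obtain i j where "i < length us" "j < length us" "u = us ! i" "w = us ! j" "i \<noteq> j"
      unfolding U_def by (metis in_set_conv_nth)
    thus "u \<bullet> w = 0" using gs(2) cs unfolding corthogonal_def by metis
  qed
  have pos: "\<forall>u\<in>U. u \<bullet> u > 0"
  proof
    fix u assume "u \<in> U"
    then obtain i where "i < length us" "u = us ! i" unfolding U_def by (metis in_set_conv_nth)
    hence ne: "u \<bullet> u \<noteq> 0" using gs(2) cs unfolding corthogonal_def by metis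
    have "u \<bullet> u = (\<Sum>l\<in>{0..<dim_vec u}. (u $ l)^2)" unfolding scalar_prod_def by (simp add: power2_eq_square)
    also have "\<dots> \<ge> 0" by (intro sum_nonneg) simp
    finally show "u \<bullet> u > 0" using ne by linarith
  qed
  have spanU: "set (cols M) \<subseteq> span U"
    using cols_in_span_maximal[OF M max] ws gs U_def by auto
  have dec: "\<forall>j<n. \<forall>i<n. M $$ (i,j) = (\<Sum>u\<in>U. u $ i * (u \<bullet> col M j) / (u \<bullet> u))"
  proof (intro allI impI)
    fix i j assume j: "j < n" and i: "i < n"
    have "col M j \<in> set (cols M)" using j M by (simp add: cols_def)
    hence "col M j \<in> span U" using spanU by auto
    from span_orth_expand[OF _ UC orth _ this i] pos
    have "col M j $ i = (\<Sum>u\<in>U. u $ i * (u \<bullet> col M j) / (u \<bullet> u))"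
      unfolding U_def by force
    thus "M $$ (i,j) = (\<Sum>u\<in>U. u $ i * (u \<bullet> col M j) / (u \<bullet> u))" using i j M by simp
  qed
  show ?thesis using cardU rk UC orth pos dec unfolding U_def by (intro exI[of _ U]) (auto simp: U_def)
qed

lemma tangent_ineq:
  fixes x s :: real assumes x: "x > 0" and s: "s > 0"
  shows "(3 - x / s^2) / (2 * s) \<le> 1 / sqrt x"
proof -
  define y where "y = sqrt x"
  have y: "y > 0" using x y_def by simp
  have xy: "x = y^2" using x y_def by simp
  have "0 \<le> (y - s)^2 * (y + 2*s)" using y s by simp
  hence key: "y * (3 * s^2 - y^2) \<le> 2 * s^3" by (simp add: algebra_simps power2_eq_square power3_eq_cube)
  have "(3 - x / s^2) / (2 * s) = y * (3 * s^2 - y^2) / (2 * s^3 * y)"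
    using s y unfolding xy by (simp add: field_simps power2_eq_square power3_eq_cube)
  also have "\<dots> \<le> 2 * s^3 / (2 * s^3 * y)"
    using key s y by (intro divide_right_mono) auto
  also have "\<dots> = 1 / sqrt x" using s y y_def by simp
  finally show ?thesis .
qed

lemma ones_sum:
  fixes M :: "real mat"
  assumes M: "M \<in> carrier_mat n n" and bin: "\<forall>i<n. \<forall>j<n. M $$ (i,j) = 0 \<or> M $$ (i,j) = 1"
  shows "real (ones M) = (\<Sum>i<n. \<Sum>j<n. M $$ (i,j))"
proof -
  have "{(i,j). i < dim_row M \<and> j < dim_col M \<and> M $$ (i,j) = 1} = {x \<in> {..<n} \<times> {..<n}. M $$ x = 1}"
    using M by auto
  hence "real (ones M) = real (card {x \<in> {..<n} \<times> {..<n}. M $$ x = 1})" unfolding ones_def by simp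
  also have "\<dots> = (\<Sum>x\<in>{x \<in> {..<n} \<times> {..<n}. M $$ x = 1}. 1)" by simp
  also have "\<dots> = (\<Sum>x\<in>{..<n} \<times> {..<n}. if M $$ x = 1 then 1 else 0)"
    by (subst sum.inter_filter) auto
  also have "\<dots> = (\<Sum>x\<in>{..<n} \<times> {..<n}. M $$ x)"
    using bin by (intro sum.cong refl) auto
  also have "\<dots> = (\<Sum>i<n. \<Sum>j<n. M $$ (i,j))"
    by (simp add: sum.cartesian_product)
  finally show ?thesis .
qed

theorem lemma3p4:
  "\<exists>c::real. c > 0 \<and>
     (\<forall>(n::nat) (r::nat) (M::real mat).
        r > 0 \<longrightarrow> n > 0 \<longrightarrow> M \<in> carrier_mat n n \<longrightarrow>
        (\<forall>i<n. \<forall>j<n. M $$ (i,j) = 0 \<or> M $$ (i,j) = 1) \<longrightarrow>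
        vec_space.rank n M \<le> r \<longrightarrow>
        real (ones M) / real n \<le> real n / 2 \<longrightarrow>
        pdisc M \<ge> c * min ((real (ones M) / real n) * real n)
                          (sqrt (real (ones M) / real n) * real n powr (3/2) / sqrt (real r)))"
proof (intro exI[of _ "1/8"] conjI allI impI)
  show "(1/8::real) > 0" by simp
  fix n r :: nat and M :: "real mat"
  assume r: "r > 0" and n: "n > 0" and M: "M \<in> carrier_mat n n"
    and bin: "\<forall>i<n. \<forall>j<n. M $$ (i,j) = 0 \<or> M $$ (i,j) = 1"
    and rk: "vec_space.rank n M \<le> r" and dens: "real (ones M) / real n \<le> real n / 2"
  define e where "e i j = M $$ (i,j)" for i j
  define m where "m = real (ones M)"
  define p where "p = m / (real n)^2"
  define dd where "dd = m / real n"
  define R where "R i = (\<Sum>j<n. e i j)" for i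
  define C where "C j = (\<Sum>i<n. e i j)" for j
  define IR where "IR i = (if R i > 2 * dd then 1 else 0 :: real)" for i
  define IC where "IC j = (if C j > 2 * dd then 1 else 0 :: real)" for j
  define eR where "eR = (\<Sum>i<n. IR i * R i)"
  define eC where "eC = (\<Sum>j<n. IC j * C j)"
  define T where "T = min ((real (ones M) / real n) * real n)
                          (sqrt (real (ones M) / real n) * real n powr (3/2) / sqrt (real r))"
  have nR: "real n > 0" using n by simp
  have e01: "e i j = 0 \<or> e i j = 1" if "i < n" "j < n" for i j using bin that e_def by auto
  have e_nonneg: "e i j \<ge> 0" if "i < n" "j < n" for i j using e01[OF that] by auto
  have msum: "m = (\<Sum>i<n. \<Sum>j<n. e i j)" unfolding m_def e_def using ones_sum[OF M bin] .
  have m0: "m \<ge> 0" unfolding m_def by simp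
  have pn: "p * real n = dd" unfolding p_def dd_def using nR by (simp add: power2_eq_square)
  have p_half: "p \<le> 1/2"
  proof -
    have "p = dd / real n" unfolding p_def dd_def by (simp add: power2_eq_square)
    also have "\<dots> \<le> (real n / 2) / real n" using dens nR unfolding dd_def m_def by (intro divide_right_mono) auto
    also have "\<dots> = 1/2" using nR by simp
    finally show ?thesis .
  qed
  have Tm: "T \<le> m" unfolding T_def m_def using nR by simp
  have gen: "2 * (\<Sum>i<n. \<Sum>j<n. (e i j - p) * (\<Sum>k\<in>K. a i k * b j k)) \<le> pdisc M"
    if "finite K" "\<And>i. i < n \<Longrightarrow> (\<Sum>k\<in>K. (a i k)^2) \<le> 1" "\<And>j. j < n \<Longrightarrow> (\<Sum>k\<in>K. (b j k)^2) \<le> 1"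
    for K :: "'k set" and a b
    using gram_lb[OF M that] unfolding e_def p_def m_def .
  have RC: "(\<Sum>i<n. IR i * R i) = (\<Sum>i<n. \<Sum>j<n. IR i * e i j)" unfolding R_def by (simp add: sum_distrib_left)
  have CC: "(\<Sum>j<n. IC j * C j) = (\<Sum>i<n. \<Sum>j<n. IC j * e i j)"
    unfolding C_def by (simp add: sum_distrib_left) (rule sum.swap)
  show "1/8 * T \<le> pdisc M"
  proof (cases "eR \<ge> m/4")
    case True
    define a where "a (i::nat) (k::unit) = IR i" for i k
    define b where "b (j::nat) (k::unit) = (1::real)" for j k
    have "2 * (\<Sum>i<n. \<Sum>j<n. (e i j - p) * (\<Sum>k\<in>{()}. a i k * b j k)) \<le> pdisc M"
      by (rule gen) (auto simp: a_def b_def IR_def)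
    moreover have "(\<Sum>i<n. \<Sum>j<n. (e i j - p) * (\<Sum>k\<in>{()}. a i k * b j k)) = (\<Sum>i<n. IR i * (R i - dd))"
    proof -
      have "(\<Sum>i<n. \<Sum>j<n. (e i j - p) * (\<Sum>k\<in>{()}. a i k * b j k)) = (\<Sum>i<n. IR i * (\<Sum>j<n. (e i j - p)))"
        by (simp add: a_def b_def sum_distrib_left mult_ac)
      also have "\<dots> = (\<Sum>i<n. IR i * (R i - dd))"
        unfolding R_def using pn by (simp add: sum_subtractf mult_ac)
      finally show ?thesis .
    qed
    moreover have "(\<Sum>i<n. IR i * (R i - dd)) \<ge> eR / 2"
    proof -
      have "(\<Sum>i<n. IR i * (R i - dd)) \<ge> (\<Sum>i<n. IR i * R i / 2)"
        by (intro sum_mono) (auto simp: IR_def)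
      thus ?thesis unfolding eR_def by (simp add: sum_divide_distrib)
    qed
    ultimately have "eR \<le> pdisc M" by linarith
    thus ?thesis using True Tm m0 by linarith
  next
    case notA: False
    show ?thesis
    proof (cases "eC \<ge> m/4")
      case True
      define a where "a (i::nat) (k::unit) = (1::real)" for i k
      define b where "b (j::nat) (k::unit) = IC j" for j k
      have "2 * (\<Sum>i<n. \<Sum>j<n. (e i j - p) * (\<Sum>k\<in>{()}. a i k * b j k)) \<le> pdisc M"
        by (rule gen) (auto simp: a_def b_def IC_def)
      moreover have "(\<Sum>i<n. \<Sum>j<n. (e i j - p) * (\<Sum>k\<in>{()}. a i k * b j k)) = (\<Sum>j<n. IC j * (C j - dd))"
      proof -
        have "(\<Sum>i<n. \<Sum>j<n. (e i j - p) * (\<Sum>k\<in>{()}. a i k * b j k)) = (\<Sum>j<n. \<Sum>i<n. (e i j - p) * IC j)"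
          by (simp add: a_def b_def) (rule sum.swap)
        also have "\<dots> = (\<Sum>j<n. IC j * (\<Sum>i<n. (e i j - p)))"
          by (simp add: sum_distrib_left mult_ac)
        also have "\<dots> = (\<Sum>j<n. IC j * (C j - dd))"
          unfolding C_def using pn by (simp add: sum_subtractf mult_ac)
        finally show ?thesis .
      qed
      moreover have "(\<Sum>j<n. IC j * (C j - dd)) \<ge> eC / 2"
      proof -
        have "(\<Sum>j<n. IC j * (C j - dd)) \<ge> (\<Sum>j<n. IC j * C j / 2)"
          by (intro sum_mono) (auto simp: IC_def)
        thus ?thesis unfolding eC_def by (simp add: sum_divide_distrib)
      qed
      ultimately have "eC \<le> pdisc M" by linarith
      thus ?thesis using True Tm m0 by linarith
    next
      case notB: False
      have m_pos: "m > 0"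
      proof (rule ccontr)
        assume "\<not> m > 0"
        hence "m = 0" using m0 by simp
        have "eR \<ge> 0" unfolding eR_def IR_def R_def
          by (intro sum_nonneg mult_nonneg_nonneg) (auto intro!: sum_nonneg e_nonneg)
        hence "eR \<ge> m/4" using \<open>m = 0\<close> by simp
        thus False using notA by simp
      qed
      have dd_pos: "dd > 0" using m_pos nR unfolding dd_def by simp
      obtain U where Ufin: "finite U" and UC: "U \<subseteq> carrier_vec n" and cardU: "card U = vec_space.rank n M"
        and Upos: "\<forall>u\<in>U. u \<bullet> u > 0" and Uorth: "\<forall>u\<in>U. \<forall>w\<in>U. u \<noteq> w \<longrightarrow> u \<bullet> w = 0"
        and dec: "\<forall>j<n. \<forall>i<n. M $$ (i,j) = (\<Sum>u\<in>U. u $ i * (u \<bullet> col M j) / (u \<bullet> u))"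
        using orth_decomp[OF M] by blast
      have cardr: "real (card U) \<le> real r" using cardU rk by simp
      define f where "f i u = u $ i / sqrt (u \<bullet> u)" for i and u :: "real vec"
      define g where "g j u = (u \<bullet> col M j) / sqrt (u \<bullet> u)" for j and u :: "real vec"
      define lam where "lam i = (\<Sum>u\<in>U. (f i u)^2)" for i
      have uu: "u \<bullet> u = (\<Sum>l<n. (u $ l)^2)" if "u \<in> U" for u
        using that UC unfolding scalar_prod_def by (auto simp: lessThan_atLeast0 power2_eq_square)
      have fg: "(\<Sum>u\<in>U. f i u * g j u) = e i j" if "i < n" "j < n" for i j
      proof -
        have "(\<Sum>u\<in>U. f i u * g j u) = (\<Sum>u\<in>U. u $ i * (u \<bullet> col M j) / (u \<bullet> u))"
        proof (intro sum.cong refl)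
          fix u assume "u \<in> U"
          hence "u \<bullet> u > 0" using Upos by auto
          hence "sqrt (u \<bullet> u) * sqrt (u \<bullet> u) = u \<bullet> u" by simp
          thus "f i u * g j u = u $ i * (u \<bullet> col M j) / (u \<bullet> u)"
            unfolding f_def g_def by (simp add: field_simps)
        qed
        thus ?thesis using dec that unfolding e_def by simp
      qed
      have lam_nonneg: "lam i \<ge> 0" for i unfolding lam_def by (intro sum_nonneg) simp
      have lam_sum: "(\<Sum>i<n. lam i) = real (card U)"
      proof -
        have "(\<Sum>i<n. lam i) = (\<Sum>u\<in>U. \<Sum>i<n. (u $ i)^2 / (sqrt (u \<bullet> u))^2)"
          unfolding lam_def f_def by (subst sum.swap) (simp add: power_divide)
        also have "\<dots> = (\<Sum>u\<in>U. \<Sum>i<n. (u $ i)^2 / (u \<bullet> u))"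
          using Upos by (intro sum.cong refl) (simp add: less_imp_le)
        also have "\<dots> = (\<Sum>u\<in>U. (\<Sum>i<n. (u $ i)^2) / (u \<bullet> u))"
          by (simp add: sum_divide_distrib)
        also have "\<dots> = (\<Sum>u\<in>U. 1)"
          using Upos uu by (intro sum.cong refl) auto
        finally show ?thesis by simp
      qed
      have gg: "(\<Sum>u\<in>U. (g j u)^2) = C j" if j: "j < n" for j
      proof -
        define c where "c = col M j"
        have cC: "c \<in> carrier_vec n" unfolding c_def using col_carrier_vec[OF j M] .
        have ci: "c $ i = e i j" if "i < n" for i
          unfolding c_def e_def using index_col[of i M j] that j M by simp
        have "C j = (\<Sum>i<n. e i j * e i j)"
          unfolding C_def
        proof (intro sum.cong refl)
          fix i assume "i \<in> {..<n}"
          hence "e i j = 0 \<or> e i j = 1" using e01 j by auto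
          thus "e i j = e i j * e i j" by auto
        qed
        also have "\<dots> = (\<Sum>i<n. e i j * (\<Sum>u\<in>U. u $ i * (u \<bullet> c) / (u \<bullet> u)))"
        proof (intro sum.cong refl)
          fix i assume "i \<in> {..<n}"
          hence "i < n" by simp
          from dec[rule_format, OF j this]
          show "e i j * e i j = e i j * (\<Sum>u\<in>U. u $ i * (u \<bullet> c) / (u \<bullet> u))"
            unfolding e_def c_def by (rule arg_cong)
        qed
        also have "\<dots> = (\<Sum>i<n. \<Sum>u\<in>U. e i j * (u $ i * (u \<bullet> c) / (u \<bullet> u)))"
          by (simp add: sum_distrib_left)
        also have "\<dots> = (\<Sum>u\<in>U. \<Sum>i<n. e i j * (u $ i * (u \<bullet> c) / (u \<bullet> u)))"
          by (rule sum.swap)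
        also have "\<dots> = (\<Sum>u\<in>U. (\<Sum>i<n. u $ i * e i j) * (u \<bullet> c) / (u \<bullet> u))"
        proof (intro sum.cong refl)
          fix u
          have "(\<Sum>i<n. e i j * (u $ i * (u \<bullet> c) / (u \<bullet> u))) = (\<Sum>i<n. (u $ i * e i j) * ((u \<bullet> c) / (u \<bullet> u)))"
            by (intro sum.cong refl) simp
          also have "\<dots> = (\<Sum>i<n. u $ i * e i j) * ((u \<bullet> c) / (u \<bullet> u))"
            by (rule sum_distrib_right[symmetric])
          finally show "(\<Sum>i<n. e i j * (u $ i * (u \<bullet> c) / (u \<bullet> u))) = (\<Sum>i<n. u $ i * e i j) * (u \<bullet> c) / (u \<bullet> u)"
            by simp
        qed
        also have "\<dots> = (\<Sum>u\<in>U. (g j u)^2)"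
        proof (intro sum.cong refl)
          fix u assume uU: "u \<in> U"
          have "u \<bullet> c = (\<Sum>i<n. u $ i * c $ i)"
            using cC unfolding scalar_prod_def by (simp add: lessThan_atLeast0)
          also have "\<dots> = (\<Sum>i<n. u $ i * e i j)"
            using ci by (intro sum.cong refl) simp
          finally have "u \<bullet> c = (\<Sum>i<n. u $ i * e i j)" .
          moreover have "u \<bullet> u > 0" using Upos uU by auto
          moreover have "g j u = (u \<bullet> c) / sqrt (u \<bullet> u)" unfolding g_def c_def ..
          ultimately show "(\<Sum>i<n. u $ i * e i j) * (u \<bullet> c) / (u \<bullet> u) = (g j u)^2"
            by (simp add: power_divide power2_eq_square)
        qed
        finally show ?thesis by simp
      qed
      have pos_lc: "lam i > 0 \<and> C j > 0" if "i < n" "j < n" "e i j = 1" for i j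
      proof
        have "C j \<ge> e i j" unfolding C_def
          using that by (intro member_le_sum) (auto intro: e_nonneg)
        thus "C j > 0" using that by simp
        show "lam i > 0"
        proof (rule ccontr)
          assume "\<not> lam i > 0"
          hence "lam i = 0" using lam_nonneg[of i] by simp
          hence "\<forall>u\<in>U. (f i u)^2 = 0" unfolding lam_def using Ufin
            by (subst (asm) sum_nonneg_eq_0_iff) auto
          hence "(\<Sum>u\<in>U. f i u * g j u) = 0" by simp
          thus False using fg[OF that(1,2)] that(3) by simp
        qed
      qed
      define a where "a i u = (if IR i = 0 \<and> lam i > 0 then f i u / sqrt (lam i) else 0)" for i u
      define b where "b j u = (if IC j = 0 \<and> C j > 0 then g j u / sqrt (C j) else 0)" for j u
      have ha: "(\<Sum>u\<in>U. (a i u)^2) \<le> 1" if "i < n" for i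
      proof (cases "IR i = 0 \<and> lam i > 0")
        case True
        have "(\<Sum>u\<in>U. (a i u)^2) = (\<Sum>u\<in>U. (f i u)^2 / lam i)"
          unfolding a_def using True by (simp add: power_divide)
        also have "\<dots> = (\<Sum>u\<in>U. (f i u)^2) / lam i" by (rule sum_divide_distrib[symmetric])
        also have "\<dots> = lam i / lam i" unfolding lam_def ..
        also have "\<dots> = 1" using True by simp
        finally show ?thesis by simp
      next
        case False hence "\<forall>u. a i u = 0" unfolding a_def by auto
        thus ?thesis by simp
      qed
      have hb: "(\<Sum>u\<in>U. (b j u)^2) \<le> 1" if "j < n" for j
      proof (cases "IC j = 0 \<and> C j > 0")
        case True
        have "(\<Sum>u\<in>U. (b j u)^2) = (\<Sum>u\<in>U. (g j u)^2 / C j)"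
          unfolding b_def using True by (simp add: power_divide)
        also have "\<dots> = C j / C j" using gg[OF that] by (simp add: sum_divide_distrib[symmetric])
        also have "\<dots> = 1" using True by simp
        finally show ?thesis by simp
      next
        case False hence "\<forall>u. b j u = 0" unfolding b_def by auto
        thus ?thesis by simp
      qed
      have V: "2 * (\<Sum>i<n. \<Sum>j<n. (e i j - p) * (\<Sum>u\<in>U. a i u * b j u)) \<le> pdisc M"
        by (rule gen[OF Ufin ha hb])
      define t where "t i j = (if IR i = 0 \<and> IC j = 0 then e i j else 0)" for i j
      define h where "h i j = (if t i j = 1 then 1 / sqrt (lam i * C j) else 0)" for i j
      have ab: "(\<Sum>u\<in>U. a i u * b j u) = (if IR i = 0 \<and> lam i > 0 \<and> IC j = 0 \<and> C j > 0
          then e i j / (sqrt (lam i) * sqrt (C j)) else 0)" if "i < n" "j < n" for i j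
      proof (cases "IR i = 0 \<and> lam i > 0 \<and> IC j = 0 \<and> C j > 0")
        case True
        have "(\<Sum>u\<in>U. a i u * b j u) = (\<Sum>u\<in>U. f i u * g j u / (sqrt (lam i) * sqrt (C j)))"
          unfolding a_def b_def using True by (intro sum.cong refl) simp
        also have "\<dots> = e i j / (sqrt (lam i) * sqrt (C j))"
          using fg[OF that] by (simp add: sum_divide_distrib[symmetric])
        finally show ?thesis using True by simp
      next
        case False
        hence "\<forall>u. a i u * b j u = 0" unfolding a_def b_def by auto
        hence "(\<Sum>u\<in>U. a i u * b j u) = 0" by simp
        thus ?thesis using False by (simp only: if_False)
      qed
      have key: "(e i j - p) * (\<Sum>u\<in>U. a i u * b j u) = (1 - p) * h i j" if ij: "i < n" "j < n" for i j
      proof (cases "e i j = 1")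
        case True
        have lc: "lam i > 0" "C j > 0" using pos_lc[OF ij True] by auto
        have sq: "sqrt (lam i * C j) = sqrt (lam i) * sqrt (C j)" by (simp add: real_sqrt_mult)
        show ?thesis unfolding ab[OF ij] h_def t_def using True lc sq by simp
      next
        case False
        hence e0: "e i j = 0" using e01[OF ij] by auto
        show ?thesis unfolding ab[OF ij] h_def t_def using e0 by simp
      qed
      define s where "s = sqrt (8 * m * real r) / real n"
      have s_pos: "s > 0" unfolding s_def using m_pos r nR by simp
      have s2: "s^2 = 8 * m * real r / (real n)^2"
        unfolding s_def using m_pos r by (simp add: power_divide)
      have t01: "t i j = 0 \<or> t i j = 1" if "i < n" "j < n" for i j
        using e01[OF that] unfolding t_def by auto
      have hlow: "h i j \<ge> (3 / (2 * s)) * t i j - (1 / (2 * s * s^2)) * (t i j * lam i * C j)"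
        if ij: "i < n" "j < n" for i j
      proof (cases "t i j = 1")
        case True
        hence e1: "e i j = 1" unfolding t_def by (auto split: if_splits)
        have lc: "lam i * C j > 0" using pos_lc[OF ij e1] by simp
        have "(3 - lam i * C j / s^2) / (2 * s) \<le> 1 / sqrt (lam i * C j)"
          by (rule tangent_ineq[OF lc s_pos])
        moreover have "(3 - lam i * C j / s^2) / (2 * s) = (3 / (2 * s)) * t i j - (1 / (2 * s * s^2)) * (t i j * lam i * C j)"
          using True s_pos by (simp add: field_simps)
        ultimately show ?thesis unfolding h_def using True by simp
      next
        case False
        hence "t i j = 0" using t01[OF ij] by auto
        thus ?thesis unfolding h_def by simp
      qed
      define E' where "E' = (\<Sum>i<n. \<Sum>j<n. t i j)"
      define Q where "Q = (\<Sum>i<n. \<Sum>j<n. t i j * lam i * C j)"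
      define H where "H = (\<Sum>i<n. \<Sum>j<n. h i j)"
      have H_low: "H \<ge> (3 / (2 * s)) * E' - (1 / (2 * s * s^2)) * Q"
      proof -
        have "H \<ge> (\<Sum>i<n. \<Sum>j<n. (3 / (2 * s)) * t i j - (1 / (2 * s * s^2)) * (t i j * lam i * C j))"
          unfolding H_def using hlow by (intro sum_mono) auto
        thus ?thesis unfolding E'_def Q_def by (simp add: sum_subtractf sum_distrib_left)
      qed
      have E'_low: "E' \<ge> m / 2"
      proof -
        have "m \<le> (\<Sum>i<n. \<Sum>j<n. t i j + IR i * e i j + IC j * e i j)"
          unfolding msum
        proof (intro sum_mono)
          fix i j assume "i \<in> {..<n}" "j \<in> {..<n}"
          hence ij: "i < n" "j < n" by auto
          show "e i j \<le> t i j + IR i * e i j + IC j * e i j"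
            using e_nonneg[OF ij] unfolding t_def IR_def IC_def by auto
        qed
        also have "\<dots> = E' + eR + eC"
          unfolding E'_def eR_def eC_def RC CC by (simp add: sum.distrib)
        finally show ?thesis using notA notB by linarith
      qed
      have Q_up: "Q \<le> 4 * dd^2 * real r"
      proof -
        have "Q \<le> (\<Sum>i<n. \<Sum>j<n. (if IR i = 0 then e i j * lam i * (2 * dd) else 0))"
          unfolding Q_def
        proof (intro sum_mono)
          fix i j assume "i \<in> {..<n}" "j \<in> {..<n}"
          hence ij: "i < n" "j < n" by auto
          show "t i j * lam i * C j \<le> (if IR i = 0 then e i j * lam i * (2 * dd) else 0)"
          proof (cases "IR i = 0 \<and> IC j = 0")
            case True
            hence "C j \<le> 2 * dd" unfolding IC_def by (auto split: if_splits)
            hence "e i j * lam i * C j \<le> e i j * lam i * (2 * dd)"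
              using e_nonneg[OF ij] lam_nonneg[of i] by (intro mult_left_mono) auto
            thus ?thesis using True unfolding t_def by simp
          next
            case False thus ?thesis unfolding t_def using e_nonneg[OF ij] lam_nonneg[of i] dd_pos by auto
          qed
        qed
        also have "\<dots> = (\<Sum>i<n. (if IR i = 0 then lam i * (2 * dd) * R i else 0))"
          unfolding R_def by (intro sum.cong refl) (auto simp: sum_distrib_left sum_distrib_right mult_ac)
        also have "\<dots> \<le> (\<Sum>i<n. lam i * (4 * dd^2))"
        proof (intro sum_mono)
          fix i assume "i \<in> {..<n}"
          show "(if IR i = 0 then lam i * (2 * dd) * R i else 0) \<le> lam i * (4 * dd^2)"
          proof (cases "IR i = 0")
            case True
            hence "R i \<le> 2 * dd" unfolding IR_def by (auto split: if_splits)
            hence "lam i * (2 * dd) * R i \<le> lam i * (2 * dd) * (2 * dd)"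
              using lam_nonneg[of i] dd_pos by (intro mult_left_mono) auto
            thus ?thesis using True by (simp add: power2_eq_square mult_ac)
          next
            case False thus ?thesis using lam_nonneg[of i] by simp
          qed
        qed
        also have "\<dots> = 4 * dd^2 * real (card U)"
          using lam_sum by (simp add: sum_distrib_right[symmetric] mult_ac)
        also have "\<dots> \<le> 4 * dd^2 * real r"
          using cardr by (intro mult_left_mono) auto
        finally show ?thesis .
      qed
      have Qs: "Q / s^2 \<le> m / 2"
      proof -
        have "Q / s^2 \<le> 4 * dd^2 * real r / s^2"
          using Q_up s_pos by (intro divide_right_mono) auto
        also have "\<dots> = m / 2"
          unfolding s2 dd_def using m_pos r nR by (simp add: field_simps power2_eq_square)
        finally show ?thesis .
      qed
      have H_low2: "H \<ge> m / (2 * s)"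
      proof -
        have "(1 / (2 * s * s^2)) * Q = (Q / s^2) / (2 * s)" using s_pos by (simp add: field_simps)
        also have "\<dots> \<le> (m / 2) / (2 * s)" using Qs s_pos by (intro divide_right_mono) auto
        finally have 1: "(1 / (2 * s * s^2)) * Q \<le> (m / 2) / (2 * s)" .
        have 2: "(3 / (2 * s)) * E' \<ge> (3 / (2 * s)) * (m / 2)"
          using E'_low s_pos by (intro mult_left_mono) auto
        have "m / (2 * s) = (3 / (2 * s)) * (m / 2) - (m / 2) / (2 * s)" using s_pos by (simp add: field_simps)
        thus ?thesis using H_low 1 2 by linarith
      qed
      have sumV: "(\<Sum>i<n. \<Sum>j<n. (e i j - p) * (\<Sum>u\<in>U. a i u * b j u)) = (1 - p) * H"
      proof -
        have "(\<Sum>i<n. \<Sum>j<n. (e i j - p) * (\<Sum>u\<in>U. a i u * b j u)) = (\<Sum>i<n. \<Sum>j<n. (1 - p) * h i j)"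
          using key by (intro sum.cong refl) auto
        also have "\<dots> = (1 - p) * H" unfolding H_def by (simp add: sum_distrib_left)
        finally show ?thesis .
      qed
      have H_nonneg: "H \<ge> 0" using H_low2 m_pos s_pos by (smt (verit) divide_pos_pos)
      have "m / (2 * s) \<le> pdisc M"
      proof -
        have "0 \<le> (1 - 2 * p) * H" using p_half H_nonneg by (intro mult_nonneg_nonneg) auto
        hence "2 * ((1 - p) * H) \<ge> H" by (simp add: algebra_simps)
        thus ?thesis using V sumV H_low2 by linarith
      qed
      moreover have "1/8 * T \<le> m / (2 * s)"
      proof -
        define Z where "Z = sqrt m * real n / sqrt (real r)"
        have Z_pos: "Z > 0" unfolding Z_def using m_pos nR r by simp
        have np: "real n powr (3/2) = real n * sqrt (real n)"
        proof -
          have "real n powr (3/2) = real n powr (1 + 1/2)" by simp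
          also have "\<dots> = real n powr 1 * real n powr (1/2)" by (rule powr_add)
          also have "\<dots> = real n * sqrt (real n)" using nR by (simp add: powr_half_sqrt)
          finally show ?thesis .
        qed
        have T2: "sqrt (real (ones M) / real n) * real n powr (3/2) / sqrt (real r) = Z"
          unfolding Z_def np m_def[symmetric] using nR by (simp add: real_sqrt_divide field_simps)
        have TZ: "T \<le> Z" unfolding T_def T2 by simp
        have ms: "m / (2 * s) = Z / (2 * sqrt 8)"
        proof -
          have sm: "sqrt m * sqrt m = m" using m_pos by simp
          have "sqrt (8 * m * real r) = sqrt 8 * sqrt m * sqrt (real r)" by (simp add: real_sqrt_mult)
          hence "m / (2 * s) = m * real n / (2 * (sqrt 8 * sqrt m * sqrt (real r)))"
            unfolding s_def using nR by (simp add: field_simps)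
          also have "\<dots> = Z / (2 * sqrt 8)" unfolding Z_def
            using m_pos r sm by (simp add: field_simps)
          finally show ?thesis .
        qed
        have s8: "sqrt (8::real) \<le> 4"
        proof -
          have "sqrt (8::real) \<le> sqrt (4^2)" by (intro real_sqrt_le_mono) simp
          thus ?thesis by simp
        qed
        have "1/8 * Z \<le> Z / (2 * sqrt 8)"
          using Z_pos s8 by (simp add: field_simps)
        thus ?thesis using TZ ms by linarith
      qed
      ultimately show ?thesis by linarith
    qed
  qed
qed

end
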